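(* Let $\mathfrak{X}=(X,\{R_i\}_{i=0}^{d+1})$ be a commutative association scheme with $R_d^{\top}=R_{d+1}$ and $R_i^{\top}=R_i$ for $0\leq i\leq d-1$, and let $\tilde{\mathfrak{X}}=(X,\{\tilde R_i\}_{i=0}^{d})$ be its symmetrization, where $\tilde R_i=R_i$ for $0\le i\le d-1$ and $\tilde R_d=R_d\cup R_{d+1}$. Suppose that the graph $(X,R_d\cup R_{d+1})$ generates $\tilde{\mathfrak{X}}$. Then: (i) the adjacency matrix of the digraph $(X,R_d)$ has exactly $d+2$ distinct eigenvalues; (ii) the digraph $(X,R_d)$ generates the association scheme $\mathfrak{X}$.
   Context: A $d$-class association scheme $(X,\{R_i\}_{i=0}^d)$ consists of a finite set $X$ and a partition of $X\times X$ into nonempty relations $R_0,\dots,R_d$ such that $R_0=\{(x,x):x\in X\}$, each transpose $R_i^\top=\{(y,x):(x,y)\in R_i\}$ equals some $R_{i'}$, and for all $i,j,l$ the number of $z$ with $(x,z)\in R_i,(z,y)\in R_j$ is a constant $p_{i,j}^l$ whenever $(x,y)\in R_l$. It is commutative if $p^l_{i,j}=p^l_{j,i}$ for all $i,j,l$. The adjacency matrix $A_i$ of $R_i$ is the $X\times X$ $01$-matrix with $(x,y)$-entry $1$ iff $(x,y)\in R_i$; the Bose–Mesner algebra $\mathcal M$ is the complex algebra spanned by $A_0,\dots,A_d$. The symmetrization $(X,\{R_0\}\cup\{R_i\cup R_i^\top\})$ is again an association scheme. For a relation $R\subseteq X\times X$ not meeting the diagonal, $(X,R)$ is a digraph (a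 graph if $R$ is symmetric) whose adjacency matrix is the $01$-matrix of $R$, and its eigenvalues are those of that matrix. A (di)graph with adjacency matrix $A$ generates a commutative association scheme if $A$ generates its Bose–Mesner algebra $\mathcal M$, i.e. every element of $\mathcal M$ is a polynomial in $A$. *)

theory Defs
  imports "HOL-Analysis.Analysis" "HOL-Computational_Algebra.Polynomial"
begin

text \<open>The point set X is the (finite, nonempty) type 'a; relations are indexed by
  0..D via R :: nat => ('a * 'a) set.\<close>

definition assoc_scheme :: "(nat \<Rightarrow> ('a::finite \<times> 'a) set) \<Rightarrow> nat \<Rightarrow> bool" where
  "assoc_scheme R D \<longleftrightarrow>
     (\<forall>i\<le>D. R i \<noteq> {}) \<and>
     (\<forall>i\<le>D. \<forall>j\<le>D. i \<noteq> j \<longrightarrow> R i \<inter> R j = {}) \<and>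
     (\<Union>i\<in>{..D}. R i) = UNIV \<and>
     R 0 = Id \<and>
     (\<forall>i\<le>D. \<exists>j\<le>D. converse (R i) = R j) \<and>
     (\<forall>i\<le>D. \<forall>j\<le>D. \<forall>l\<le>D. \<exists>p::nat. \<forall>x y. (x, y) \<in> R l \<longrightarrow>
         card {z. (x, z) \<in> R i \<and> (z, y) \<in> R j} = p)"

definition commutative_scheme :: "(nat \<Rightarrow> ('a::finite \<times> 'a) set) \<Rightarrow> nat \<Rightarrow> bool" where
  "commutative_scheme R D \<longleftrightarrow> assoc_scheme R D \<and>
     (\<forall>i\<le>D. \<forall>j\<le>D. \<forall>l\<le>D. \<forall>x y. (x, y) \<in> R l \<longrightarrow>
         card {z. (x, z) \<in> R i \<and> (z, y) \<in> R j} = card {z. (x, z) \<in> R j \<and> (z, y) \<in> R i})"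

definition adj :: "('a::finite \<times> 'a) set \<Rightarrow> complex^'a^'a" where
  "adj S = (\<chi> x y. if (x, y) \<in> S then 1 else 0)"

definition mat_scale :: "complex \<Rightarrow> complex^'a^'a \<Rightarrow> complex^'a^'a" where
  "mat_scale c M = (\<chi> i j. c * M $ i $ j)"

definition bose_mesner :: "(nat \<Rightarrow> ('a::finite \<times> 'a) set) \<Rightarrow> nat \<Rightarrow> (complex^'a^'a) set" where
  "bose_mesner R D = {M. \<exists>c::nat \<Rightarrow> complex. M = (\<Sum>i\<le>D. mat_scale (c i) (adj (R i)))}"

definition mat_pow :: "complex^'a^'a \<Rightarrow> nat \<Rightarrow> complex^'a^'a" where
  "mat_pow A k = (((**) A) ^^ k) (mat 1)"

definition poly_mat :: "complex poly \<Rightarrow> complex^'a^'a \<Rightarrow> complex^'a^'a" where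
  "poly_mat p A = (\<Sum>k\<le>degree p. mat_scale (coeff p k) (mat_pow A k))"

definition generates :: "complex^'a^'a \<Rightarrow> (complex^'a^'a) set \<Rightarrow> bool" where
  "generates A M \<longleftrightarrow> (\<forall>B\<in>M. \<exists>p. B = poly_mat p A)"

definition eigenvalues :: "complex^'a^'a \<Rightarrow> complex set" where
  "eigenvalues M = {c. \<exists>v. v \<noteq> 0 \<and> M *v v = c *s v}"

text \<open>Symmetrization for the case R_d^T = R_{d+1}, others symmetric.\<close>
definition symmetrization :: "(nat \<Rightarrow> ('a \<times> 'a) set) \<Rightarrow> nat \<Rightarrow> nat \<Rightarrow> ('a \<times> 'a) set" where
  "symmetrization R d i = (if i < d then R i else R d \<union> R (Suc d))"

end

theory Submission
  imports Defs "HOL-Computational_Algebra.Fundamental_Theorem_Algebra"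
begin


lemma mat_scale_entry[simp]: "mat_scale c M $ i $ j = c * M $ i $ j"
  by (simp add: mat_scale_def)

interpretation mv: vector_space "mat_scale :: complex \<Rightarrow> complex^'n^'n \<Rightarrow> complex^'n^'n"
  by unfold_locales (simp_all add: vec_eq_iff algebra_simps)

lemma mat_pow_0[simp]: "mat_pow A 0 = mat 1"
  by (simp add: mat_pow_def)

lemma mat_pow_Suc: "mat_pow A (Suc k) = A ** mat_pow A k"
  by (simp add: mat_pow_def)

lemma mat_mul_scale_right: "(A::complex^'n^'n) ** mat_scale c M = mat_scale c (A ** M)"
  by (simp add: vec_eq_iff matrix_matrix_mult_def sum_distrib_left mult.left_commute)

lemma mat_mul_scale_left: "mat_scale c (M::complex^'n^'n) ** A = mat_scale c (M ** A)"
  by (simp add: vec_eq_iff matrix_matrix_mult_def sum_distrib_left mult.assoc)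

lemma matrix_add_rdistrib': "((B + C) ** (A::complex^'n^'n)) = (B ** A) + (C ** A)"
  by (simp add: vec_eq_iff matrix_matrix_mult_def sum.distrib distrib_right)

lemma matrix_diff_rdistrib': "((B - C) ** (A::complex^'n^'n)) = (B ** A) - (C ** A)"
  by (simp add: vec_eq_iff matrix_matrix_mult_def sum_subtractf left_diff_distrib)

lemma matrix_diff_ldistrib': "((A::complex^'n^'n) ** (B - C)) = (A ** B) - (A ** C)"
  by (simp add: vec_eq_iff matrix_matrix_mult_def sum_subtractf right_diff_distrib)

lemma mat_mul_sum_right: "(A::complex^'n^'n) ** sum f K = (\<Sum>k\<in>K. A ** f k)"
  by (induction K rule: infinite_finite_induct) (simp_all add: matrix_add_ldistrib)

lemma mat_mul_sum_left: "sum f K ** (A::complex^'n^'n) = (\<Sum>k\<in>K. f k ** A)"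
  by (induction K rule: infinite_finite_induct) (simp_all add: matrix_add_rdistrib')

lemma mat_scale_vec: "mat_scale c M *v v = c *s (M *v v)"
  by (simp add: vec_eq_iff matrix_vector_mult_def sum_distrib_left mult.assoc)

lemma mat_vec_scale: "(M::complex^'n^'n) *v (c *s v) = c *s (M *v v)"
  by (simp add: vec_eq_iff matrix_vector_mult_def sum_distrib_left mult.left_commute)

lemma mat_scale_one: "mat_scale c (mat 1) = mat c"
  by (simp add: vec_eq_iff mat_def)

lemma mat_vec_const: "mat c *v v = c *s (v::complex^'n)"
  by (metis mat_scale_one mat_scale_vec matrix_vector_mul_lid)

lemma poly_mat_lt:
  assumes "degree p < n"
  shows "poly_mat p A = (\<Sum>k<n. mat_scale (coeff p k) (mat_pow A k))"
proof -
  have "poly_mat p A = (\<Sum>k\<in>{..degree p}. mat_scale (coeff p k) (mat_pow A k))"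
    by (simp add: poly_mat_def)
  also have "\<dots> = (\<Sum>k<n. mat_scale (coeff p k) (mat_pow A k))"
    using assms by (intro sum.mono_neutral_left) (auto simp: coeff_eq_0)
  finally show ?thesis .
qed

lemma poly_mat_0[simp]: "poly_mat 0 A = 0"
  by (simp add: poly_mat_def)

lemma poly_mat_pCons: "poly_mat (pCons a p) A = mat a + A ** poly_mat p A"
proof -
  let ?n = "Suc (degree p)"
  have d1: "degree (pCons a p) < Suc ?n"
    by (metis degree_pCons_le le_imp_less_Suc)
  have "poly_mat (pCons a p) A = (\<Sum>k<Suc ?n. mat_scale (coeff (pCons a p) k) (mat_pow A k))"
    by (rule poly_mat_lt[OF d1])
  also have "\<dots> = mat_scale a (mat 1) + (\<Sum>k<?n. mat_scale (coeff p k) (mat_pow A (Suc k)))"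
    by (subst sum.lessThan_Suc_shift) (simp add: add.commute)
  also have "(\<Sum>k<?n. mat_scale (coeff p k) (mat_pow A (Suc k))) = A ** poly_mat p A"
    unfolding poly_mat_lt[of p ?n, OF lessI] mat_mul_sum_right
    by (simp add: mat_mul_scale_right mat_pow_Suc)
  finally show ?thesis by (simp add: mat_scale_one)
qed

lemma poly_mat_const[simp]: "poly_mat [:c:] A = mat c"
  using poly_mat_pCons[of c 0 A] by simp

lemma poly_mat_linear: "poly_mat [:-r, 1:] A = A - mat r"
proof -
  have "poly_mat [:-r,1:] A = mat (-r) + A" using poly_mat_pCons[of "-r" "[:1:]" A] by simp
  also have "mat (-r) + A = A - mat r" by (simp add: vec_eq_iff mat_def)
  finally show ?thesis .
qed

lemma poly_mat_add: "poly_mat (p + q) A = poly_mat p A + poly_mat q A"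
proof -
  let ?n = "Suc (max (degree p) (degree q))"
  have "degree (p+q) < ?n" using degree_add_le_max[of p q] by (simp add: le_imp_less_Suc)
  then have "poly_mat (p + q) A = (\<Sum>k<?n. mat_scale (coeff (p+q) k) (mat_pow A k))"
    by (rule poly_mat_lt)
  moreover have "poly_mat p A = (\<Sum>k<?n. mat_scale (coeff p k) (mat_pow A k))"
    by (rule poly_mat_lt) simp
  moreover have "poly_mat q A = (\<Sum>k<?n. mat_scale (coeff q k) (mat_pow A k))"
    by (rule poly_mat_lt) simp
  ultimately show ?thesis
    by (simp add: sum.distrib[symmetric] mv.scale_left_distrib)
qed

lemma poly_mat_smult: "poly_mat (smult c p) A = mat_scale c (poly_mat p A)"
proof -
  let ?n = "Suc (degree p)"
  have "degree (smult c p) < ?n" by (simp add: le_imp_less_Suc)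
  then have "poly_mat (smult c p) A = (\<Sum>k<?n. mat_scale (coeff (smult c p) k) (mat_pow A k))"
    by (rule poly_mat_lt)
  moreover have "poly_mat p A = (\<Sum>k<?n. mat_scale (coeff p k) (mat_pow A k))"
    by (rule poly_mat_lt) simp
  ultimately show ?thesis
    by (simp add: mv.scale_sum_right mv.scale_scale del: sum.lessThan_Suc)
qed

lemma mat_const_mul: "mat c ** (M::complex^'n^'n) = mat_scale c M"
  by (metis mat_mul_scale_left mat_scale_one matrix_mul_lid)

lemma poly_mat_mult: "poly_mat (p * q) A = poly_mat p A ** poly_mat q A"
proof (induction p rule: pCons_induct)
  case 0
  then show ?case by simp
next
  case (pCons a p)
  have "poly_mat (pCons a p * q) A = poly_mat (smult a q + pCons 0 (p * q)) A"
    by simp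
  also have "\<dots> = mat_scale a (poly_mat q A) + A ** (poly_mat p A ** poly_mat q A)"
    by (simp add: poly_mat_add poly_mat_smult poly_mat_pCons pCons.IH)
  also have "\<dots> = poly_mat (pCons a p) A ** poly_mat q A"
    by (simp add: poly_mat_pCons matrix_add_rdistrib' matrix_mul_assoc mat_const_mul)
  finally show ?case .
qed

lemma poly_mat_commute:
  assumes "W ** A = A ** (W::complex^'n^'n)"
  shows "W ** poly_mat p A = poly_mat p A ** W"
proof (induction p rule: pCons_induct)
  case 0
  then show ?case by simp
next
  case (pCons a p)
  have "W ** mat a = mat a ** W"
    by (simp add: vec_eq_iff matrix_matrix_mult_def mat_def if_distrib if_distribR sum.delta' mult.commute cong: if_cong)
  then show ?case
    by (simp add: poly_mat_pCons matrix_add_ldistrib matrix_add_rdistrib' matrix_mul_assoc assms pCons.IH)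
       (simp add: matrix_mul_assoc[symmetric] pCons.IH)
qed

lemma poly_mat_eigvec:
  assumes "A *v v = l *s v"
  shows "poly_mat p A *v v = poly p l *s v"
proof (induction p rule: pCons_induct)
  case 0
  then show ?case by (simp add: vec_eq_iff)
next
  case (pCons a p)
  show ?case
    by (simp add: poly_mat_pCons matrix_vector_mult_add_rdistrib mat_vec_const
        matrix_vector_mul_assoc[symmetric] pCons.IH mat_vec_scale assms vec_eq_iff algebra_simps)
qed

lemma poly_mat_monoms:
  "poly_mat (\<Sum>k<n. monom (u k) k) A = (\<Sum>k<n. mat_scale (u k) (mat_pow A k))"
proof -
  have "degree (\<Sum>k<n. monom (u k) k) < Suc n"
    by (rule le_imp_less_Suc, rule degree_sum_le) (auto simp: degree_monom_le intro: order.trans[OF degree_monom_le])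
  hence "poly_mat (\<Sum>k<n. monom (u k) k) A = (\<Sum>k<Suc n. mat_scale (coeff (\<Sum>k<n. monom (u k) k) k) (mat_pow A k))"
    by (rule poly_mat_lt)
  also have "\<dots> = (\<Sum>k<Suc n. mat_scale (if k < n then u k else 0) (mat_pow A k))"
    by (intro sum.cong refl) (simp add: coeff_sum coeff_monom)
  also have "\<dots> = (\<Sum>k<n. mat_scale (u k) (mat_pow A k))"
    by simp
  finally show ?thesis .
qed

lemma coeff_monoms: "coeff (\<Sum>k<n. monom (u k) k) j = (if j < n then u j else 0)"
  by (simp add: coeff_sum coeff_monom)




definition ip :: "complex^'n \<Rightarrow> complex^'n \<Rightarrow> complex" where
  "ip v w = (\<Sum>i\<in>UNIV. cnj (v$i) * w$i)"

definition ct :: "complex^'n^'n \<Rightarrow> complex^'n^'n" where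
  "ct Z = (\<chi> i j. cnj (Z$j$i))"

definition normalm :: "complex^'n^'n \<Rightarrow> bool" where
  "normalm Z \<longleftrightarrow> Z ** ct Z = ct Z ** Z"

lemma ip_adj: "ip (Z *v v) w = ip v (ct Z *v w)"
proof -
  have "ip (Z *v v) w = (\<Sum>i\<in>UNIV. \<Sum>j\<in>UNIV. cnj (Z$i$j) * cnj (v$j) * w$i)"
    by (simp add: ip_def matrix_vector_mult_def sum_distrib_right)
  also have "\<dots> = (\<Sum>j\<in>UNIV. \<Sum>i\<in>UNIV. cnj (Z$i$j) * cnj (v$j) * w$i)"
    by (rule sum.swap)
  also have "\<dots> = ip v (ct Z *v w)"
    by (simp add: ip_def ct_def matrix_vector_mult_def sum_distrib_left mult_ac)
  finally show ?thesis .
qed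

lemma ip_zero_right[simp]: "ip u 0 = 0"
  by (simp add: ip_def)

lemma ip_self_zero: assumes "ip v v = 0" shows "v = 0"
proof -
  have "ip v v = of_real (\<Sum>i\<in>UNIV. (norm (v$i))^2)"
    unfolding ip_def of_real_sum by (intro sum.cong refl) (metis complex_norm_square mult.commute)
  with assms have "(\<Sum>i\<in>UNIV. (norm (v$i))^2) = 0" by (simp only: of_real_eq_0_iff)
  hence "\<forall>i\<in>UNIV. (norm (v$i))^2 = 0"
    by (subst sum_nonneg_eq_0_iff[symmetric]) auto
  thus ?thesis by (simp add: vec_eq_iff)
qed

lemma ct_ct[simp]: "ct (ct Z) = Z"
  by (simp add: ct_def vec_eq_iff)

lemma ct_diff_mat: "ct (Z - mat r) = ct Z - mat (cnj r)"
  by (auto simp add: ct_def vec_eq_iff mat_def)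

lemma mat_mul_const': "(M::complex^'n^'n) ** mat c = mat_scale c M"
  by (simp add: vec_eq_iff matrix_matrix_mult_def mat_def if_distrib if_distribR sum.delta' mult.commute cong: if_cong)

lemma normal_kernel:
  assumes "normalm Z" "Z *v u = 0"
  shows "ct Z *v u = 0"
proof -
  have "ip (ct Z *v u) (ct Z *v u) = ip u (Z *v (ct Z *v u))"
    using ip_adj[of "ct Z" u] by simp
  also have "\<dots> = ip u (ct Z *v (Z *v u))"
    using assms(1) by (simp add: normalm_def matrix_vector_mul_assoc)
  also have "\<dots> = 0" using assms(2) by simp
  finally show ?thesis by (rule ip_self_zero)
qed

lemma normal_shift:
  assumes "normalm Z"
  shows "normalm (Z - mat r)"
  using assms
  by (simp add: normalm_def ct_diff_mat matrix_diff_rdistrib' matrix_diff_ldistrib' mat_const_mul mat_mul_const'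
      algebra_simps)
     (simp add: vec_eq_iff mat_def mult.commute)

lemma normal_sq_kernel:
  assumes "normalm Y" "Y *v (Y *v u) = 0"
  shows "Y *v u = 0"
proof -
  have "ct Y *v (Y *v u) = 0" by (rule normal_kernel[OF assms])
  hence "ip (Y *v u) (Y *v u) = 0" by (simp add: ip_adj)
  thus ?thesis by (rule ip_self_zero)
qed

lemma scale_vec_zero: "c *s (v::complex^'n) = 0 \<Longrightarrow> v \<noteq> 0 \<Longrightarrow> c = 0"
  by (auto simp: vec_eq_iff)

lemma eig_unique: "(Z::complex^'n^'n) *v w = a *s w \<Longrightarrow> Z *v w = b *s w \<Longrightarrow> w \<noteq> 0 \<Longrightarrow> a = b"
  by (metis (no_types, lifting) eq_iff_diff_eq_0 scale_vec_zero vector_sadd_rdistrib vector_sneg_minus1 vector_smult_assoc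
      add_diff_cancel_left' diff_add_cancel)

lemma poly_mat_monom: "poly_mat (monom c k) A = mat_scale c (mat_pow A k)"
  using poly_mat_monoms[where n="Suc k" and u="\<lambda>j. if j = k then c else 0" and A=A]
  by (simp add: if_distrib[of "\<lambda>c. monom c _"] if_distrib[of "\<lambda>c. mat_scale c _"] sum.delta' cong: if_cong)

lemma poly_mat_diff: "poly_mat (p - q) A = poly_mat p A - poly_mat q A"
proof -
  have "p - q = p + smult (-1) q" by simp
  hence "poly_mat (p - q) A = poly_mat p A + mat_scale (-1) (poly_mat q A)"
    by (simp only: poly_mat_add poly_mat_smult)
  thus ?thesis by (simp add: vec_eq_iff)
qed

lemma annihilator_exists:
  fixes Z :: "complex^'n^'n"
  assumes fin: "finite T" and pw: "\<And>k. mat_pow Z k \<in> mv.span T"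
  shows "\<exists>q. q \<noteq> 0 \<and> poly_mat q Z = 0"
proof (cases "inj_on (mat_pow Z) {..<Suc (card T)}")
  case True
  let ?P = "mat_pow Z ` {..<Suc (card T)}"
  have cardP: "card ?P = Suc (card T)" using True card_image by fastforce
  have "\<not> mv.independent ?P"
  proof
    assume "mv.independent ?P"
    from mv.independent_span_bound[OF fin this] pw have "card ?P \<le> card T" by auto
    with cardP show False by simp
  qed
  then obtain u where u: "\<exists>v\<in>?P. u v \<noteq> 0" "(\<Sum>v\<in>?P. mat_scale (u v) v) = 0"
    using mv.dependent_finite[of ?P] by auto
  define q where "q = (\<Sum>k<Suc (card T). monom (u (mat_pow Z k)) k)"
  have "poly_mat q Z = (\<Sum>k<Suc (card T). mat_scale (u (mat_pow Z k)) (mat_pow Z k))"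
    by (simp only: q_def poly_mat_monoms)
  also have "\<dots> = (\<Sum>v\<in>?P. mat_scale (u v) v)"
    using sum.reindex[OF True, of "\<lambda>v. mat_scale (u v) v"] by simp
  also have "\<dots> = 0" by (rule u(2))
  finally have "poly_mat q Z = 0" .
  moreover have "q \<noteq> 0"
  proof
    assume "q = 0"
    from u(1) obtain k where k: "k < Suc (card T)" "u (mat_pow Z k) \<noteq> 0" by auto
    have "coeff q k = u (mat_pow Z k)" using k(1) by (simp add: q_def coeff_monoms)
    with \<open>q = 0\<close> k(2) show False by simp
  qed
  ultimately show ?thesis by blast
next
  case False
  then obtain i j where ij: "i \<noteq> j" "mat_pow Z i = mat_pow Z j"
    by (auto simp: inj_on_def)
  define q where "q = monom (1::complex) i - monom 1 j"
  have "poly_mat q Z = 0" using ij by (simp add: q_def poly_mat_diff poly_mat_monom)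
  moreover have "coeff q i = 1" using ij by (simp add: q_def coeff_monom)
  hence "q \<noteq> 0" by auto
  ultimately show ?thesis by blast
qed

lemma eig_subset_roots:
  assumes "poly_mat q Z = 0" 
  shows "eigenvalues Z \<subseteq> {x. poly q x = 0}"
proof
  fix l assume "l \<in> eigenvalues Z"
  then obtain v where v: "v \<noteq> 0" "Z *v v = l *s v" by (auto simp: eigenvalues_def)
  have "poly q l *s v = 0" using poly_mat_eigvec[OF v(2), of q] assms by simp
  with v(1) show "l \<in> {x. poly q x = 0}" using scale_vec_zero by auto
qed

lemma eig_finite:
  assumes "q \<noteq> 0" "poly_mat q Z = 0" 
  shows "finite (eigenvalues Z)"
  using eig_subset_roots[OF assms(2)] poly_roots_finite[OF assms(1)] finite_subset by blast

lemma powers_indep_sum: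
  assumes L: "L \<subseteq> eigenvalues Z" "finite L" "card L = m"
    and s: "(\<Sum>k<m. mat_scale (u k) (mat_pow Z k)) = 0"
  shows "\<forall>k<m. u k = 0"
proof (cases "m = 0")
  case True thus ?thesis by simp
next
  case False
  define p where "p = (\<Sum>k<m. monom (u k) k)"
  have pz: "poly_mat p Z = 0" using s by (simp only: p_def poly_mat_monoms)
  have roots: "L \<subseteq> {x. poly p x = 0}" using eig_subset_roots[OF pz] L(1) by blast
  have "p = 0"
  proof (rule ccontr)
    assume pn: "p \<noteq> 0"
    have "degree p \<le> m - 1" unfolding p_def
      by (rule degree_sum_le) (auto intro: order.trans[OF degree_monom_le])
    moreover have "card L \<le> card {x. poly p x = 0}"
      by (rule card_mono[OF poly_roots_finite[OF pn] roots])
    moreover note card_poly_roots_bound[OF pn]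
    ultimately show False using L(3) False by linarith
  qed
  thus ?thesis using coeff_monoms[of u m] unfolding p_def by (metis coeff_0)
qed

lemma sum_two_points:
  assumes "finite K" "i \<in> K" "j \<in> K" "i \<noteq> j"
  shows "(\<Sum>k\<in>K. mat_scale (if k = i then 1 else if k = j then -1 else 0) (f k)) = f i - (f j :: complex^'n^'n)"
proof -
  have "(\<Sum>k\<in>K. mat_scale (if k = i then 1 else if k = j then -1 else 0) (f k))
      = (\<Sum>k\<in>K. (if k = i then f k else 0) - (if k = j then f k else 0))"
    using assms(4) by (intro sum.cong refl) (auto simp: vec_eq_iff)
  also have "\<dots> = f i - f j" using assms by (simp add: sum_subtractf sum.delta)
  finally show ?thesis .
qed

lemma powers_indep:
  assumes L: "L \<subseteq> eigenvalues Z" "finite L" "card L = m"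
  shows "inj_on (mat_pow Z) {..<m}" "mv.independent (mat_pow Z ` {..<m})"
proof -
  show inj: "inj_on (mat_pow Z) {..<m}"
  proof (rule inj_onI, rule ccontr)
    fix i j assume ij: "i \<in> {..<m}" "j \<in> {..<m}" "mat_pow Z i = mat_pow Z j" "i \<noteq> j"
    let ?u = "\<lambda>k. if k = i then 1 else if k = j then -1 else (0::complex)"
    have "(\<Sum>k<m. mat_scale (?u k) (mat_pow Z k)) = 0"
      using sum_two_points[of "{..<m}" i j "mat_pow Z"] ij by simp
    from powers_indep_sum[OF L this] ij show False by auto
  qed
  show "mv.independent (mat_pow Z ` {..<m})"
  proof
    assume "mv.dependent (mat_pow Z ` {..<m})"
    then obtain u where u: "\<exists>v\<in>mat_pow Z ` {..<m}. u v \<noteq> 0" "(\<Sum>v\<in>mat_pow Z ` {..<m}. mat_scale (u v) v) = 0"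
      using mv.dependent_finite[of "mat_pow Z ` {..<m}"] by auto
    have "(\<Sum>k<m. mat_scale (u (mat_pow Z k)) (mat_pow Z k)) = 0"
      using u(2) sum.reindex[OF inj, of "\<lambda>v. mat_scale (u v) v"] by simp
    from powers_indep_sum[OF L this] u(1) show False by auto
  qed
qed

lemma linear_factor:
  assumes "degree (q::complex poly) \<noteq> 0"
  obtains r q' where "q = [:-r,1:] * q'" "q' \<noteq> 0" "degree q' < degree q"
proof -
  have "\<not> constant (poly q)" using assms by (simp add: constant_degree)
  then obtain r where "poly q r = 0" using fundamental_theorem_of_algebra by blast
  then obtain q' where q': "q = [:-r,1:] * q'" using poly_eq_0_iff_dvd by (metis dvdE)
  have "q \<noteq> 0" using assms by auto
  hence "q' \<noteq> 0" using q' by auto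
  hence "degree ([:-r,1:] * q') = degree [:-r,1:] + degree q'" by (intro degree_mult_eq) simp_all
  hence "degree q = 1 + degree q'" using q' by simp
  hence "degree q' < degree q" by simp
  with q' \<open>q' \<noteq> 0\<close> that show ?thesis by blast
qed

lemma eigvec_from_annih:
  fixes Z :: "complex^'n^'n"
  shows "q \<noteq> 0 \<Longrightarrow> poly_mat q Z *v v = 0 \<Longrightarrow> v \<noteq> 0 \<Longrightarrow>
    \<exists>g l. poly_mat g Z *v v \<noteq> 0 \<and> Z *v (poly_mat g Z *v v) = l *s (poly_mat g Z *v v)"
proof (induction "degree q" arbitrary: q rule: less_induct)
  case less
  show ?case
  proof (cases "degree q = 0")
    case True
    then obtain c where c: "q = [:c:]" using degree_eq_zeroE by blast
    with less.prems have "c \<noteq> 0" "c *s v = 0" by (auto simp: mat_vec_const)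
    with less.prems(3) show ?thesis using scale_vec_zero by blast
  next
    case False
    then obtain r q' where q': "q = [:-r,1:] * q'" "q' \<noteq> 0" "degree q' < degree q"
      by (rule linear_factor)
    let ?u = "poly_mat q' Z *v v"
    have fac1: "poly_mat q Z = (Z - mat r) ** poly_mat q' Z"
      by (simp only: q' poly_mat_mult poly_mat_linear)
    have "(Z - mat r) *v ?u = 0"
      using less.prems(2) by (simp add: fac1 matrix_vector_mul_assoc)
    hence ev: "Z *v ?u = r *s ?u" by (simp add: matrix_vector_mult_diff_rdistrib mat_vec_const)
    show ?thesis
    proof (cases "?u = 0")
      case True
      from less.hyps[OF q'(3) q'(2) True less.prems(3)] show ?thesis .
    next
      case False
      with ev show ?thesis by blast
    qed
  qed
qed

lemma ss_lemma:
  fixes Z :: "complex^'n^'n"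
  assumes nZ: "normalm Z" and fin: "finite (eigenvalues Z)"
  shows "q \<noteq> 0 \<Longrightarrow> poly_mat q Z *v v = 0 \<Longrightarrow> poly_mat (\<Prod>l\<in>eigenvalues Z. [:-l,1:]) Z *v v = 0"
proof (induction "degree q" arbitrary: q v rule: less_induct)
  case less
  let ?E = "eigenvalues Z"
  let ?P = "\<Prod>l\<in>?E. [:-l,1:]"
  show ?case
  proof (cases "degree q = 0")
    case True
    then obtain c where c: "q = [:c:]" using degree_eq_zeroE by blast
    with less.prems have "c \<noteq> 0" "c *s v = 0" by (auto simp: mat_vec_const)
    hence "v = 0" using scale_vec_zero by blast
    thus ?thesis by simp
  next
    case False
    then obtain r q' where q': "q = [:-r,1:] * q'" "q' \<noteq> 0" "degree q' < degree q"
      by (rule linear_factor)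
    have fac1: "poly_mat q Z = (Z - mat r) ** poly_mat q' Z"
      by (simp only: q' poly_mat_mult poly_mat_linear)
    have fac2: "poly_mat q Z = poly_mat q' Z ** (Z - mat r)"
      by (simp only: q' mult.commute[of "[:-r,1:]"] poly_mat_mult poly_mat_linear)
    show ?thesis
    proof (cases "r \<in> ?E")
      case False
      have "poly_mat q' Z *v v = 0"
      proof (rule ccontr)
        assume ne: "poly_mat q' Z *v v \<noteq> 0"
        have "(Z - mat r) *v (poly_mat q' Z *v v) = 0"
          using fac1 less.prems by (simp add: matrix_vector_mul_assoc)
        hence "Z *v (poly_mat q' Z *v v) = r *s (poly_mat q' Z *v v)"
          by (simp add: matrix_vector_mult_diff_rdistrib mat_vec_const)
        hence "r \<in> ?E" using ne by (auto simp: eigenvalues_def)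
        with False show False by simp
      qed
      then show ?thesis using less.hyps[OF q'(3) q'(2)] by blast
    next
      case True
      have h1: "poly_mat q' Z *v ((Z - mat r) *v v) = 0"
        using fac2 less.prems by (simp add: matrix_vector_mul_assoc)
      have h2: "poly_mat ?P Z *v ((Z - mat r) *v v) = 0"
        using less.hyps[OF q'(3) q'(2) h1] .
      define P' where "P' = (\<Prod>l\<in>?E-{r}. [:-l,1:])"
      have Pfac: "?P = [:-r,1:] * P'"
        unfolding P'_def by (rule prod.remove[OF fin True])
      let ?u = "poly_mat P' Z *v v"
      have "poly_mat ?P Z ** (Z - mat r) = (Z - mat r) ** ((Z - mat r) ** poly_mat P' Z)"
      proof -
        have "?P * [:-r,1:] = [:-r,1:] * ([:-r,1:] * P')" by (simp add: Pfac mult_ac)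
        hence "poly_mat (?P * [:-r,1:]) Z = poly_mat ([:-r,1:] * ([:-r,1:] * P')) Z" by simp
        thus ?thesis by (simp only: poly_mat_mult poly_mat_linear)
      qed
      hence "(Z - mat r) *v ((Z - mat r) *v ?u) = 0"
        using h2 by (simp add: matrix_vector_mul_assoc)
      hence "(Z - mat r) *v ?u = 0"
        by (rule normal_sq_kernel[OF normal_shift[OF nZ]])
      moreover have "poly_mat ?P Z = (Z - mat r) ** poly_mat P' Z"
        by (simp only: Pfac poly_mat_mult poly_mat_linear)
      ultimately show ?thesis
        by (simp add: matrix_vector_mul_assoc)
    qed
  qed
qed

lemma ss_matrix:
  fixes Z :: "complex^'n^'n"
  assumes nZ: "normalm Z" and q: "q \<noteq> 0" "poly_mat q Z = 0"
  shows "poly_mat (\<Prod>l\<in>eigenvalues Z. [:-l,1:]) Z = 0"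
proof -
  have fin: "finite (eigenvalues Z)" by (rule eig_finite[OF q])
  show ?thesis
    using ss_lemma[OF nZ fin q(1)] q(2) by (simp add: matrix_eq)
qed




lemma adj_entry[simp]: "adj S $ x $ y = (if (x,y) \<in> S then 1 else 0)"
  by (simp add: adj_def)

lemma bm_entry:
  fixes D :: nat
  assumes disj: "\<forall>i\<le>D. \<forall>j\<le>D. i \<noteq> j \<longrightarrow> Q i \<inter> Q j = {}" and l: "l \<le> D" "(x,y) \<in> Q l"
  shows "(\<Sum>i\<le>D. mat_scale (c i) (adj (Q i))) $ x $ y = c l"
proof -
  have "(\<Sum>i\<le>D. mat_scale (c i) (adj (Q i))) $ x $ y = (\<Sum>i\<le>D. c i * (if (x,y) \<in> Q i then 1 else 0))"
    by (simp add: sum_component)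
  also have "\<dots> = (\<Sum>i\<le>D. if i = l then c i else 0)"
    using disj l by (intro sum.cong refl) auto
  also have "\<dots> = c l" using l by simp
  finally show ?thesis .
qed

lemma family_indep:
  fixes D :: nat
  assumes ne: "\<forall>i\<le>D. Q i \<noteq> {}" and disj: "\<forall>i\<le>D. \<forall>j\<le>D. i \<noteq> j \<longrightarrow> Q i \<inter> Q j = {}"
  shows "inj_on (\<lambda>i. adj (Q i)) {..D}" "mv.independent ((\<lambda>i. adj (Q i)) ` {..D})"
proof -
  show inj: "inj_on (\<lambda>i. adj (Q i)) {..D}"
  proof (rule inj_onI, rule ccontr)
    fix i j assume ij: "i \<in> {..D}" "j \<in> {..D}" "adj (Q i) = adj (Q j)" "i \<noteq> j"
    from ne ij obtain x y where xy: "(x,y) \<in> Q i" by fastforce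
    have "adj (Q i) $ x $ y = adj (Q j) $ x $ y" using ij by simp
    hence "(x,y) \<in> Q j" using xy by (simp split: if_splits)
    with xy disj ij show False by auto
  qed
  show "mv.independent ((\<lambda>i. adj (Q i)) ` {..D})"
  proof
    assume "mv.dependent ((\<lambda>i. adj (Q i)) ` {..D})"
    then obtain u where u: "\<exists>i\<in>{..D}. u (adj (Q i)) \<noteq> 0"
      "(\<Sum>v\<in>(\<lambda>i. adj (Q i)) ` {..D}. mat_scale (u v) v) = 0"
      using mv.dependent_finite[of "(\<lambda>i. adj (Q i)) ` {..D}"] by auto
    have s: "(\<Sum>i\<le>D. mat_scale (u (adj (Q i))) (adj (Q i))) = 0"
      using u(2) sum.reindex[OF inj, of "\<lambda>v. mat_scale (u v) v"] by simp
    from u(1) obtain l where l: "l \<le> D" "u (adj (Q l)) \<noteq> 0" by auto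
    from ne l obtain x y where xy: "(x,y) \<in> Q l" by fastforce
    have "(\<Sum>i\<le>D. mat_scale (u (adj (Q i))) (adj (Q i))) $ x $ y = u (adj (Q l))"
      by (rule bm_entry[OF disj l(1) xy])
    with s l(2) show False by simp
  qed
qed

lemma bm_span: "bose_mesner Q D \<subseteq> mv.span ((\<lambda>i. adj (Q i)) ` {..D})"
proof
  fix M assume "M \<in> bose_mesner Q D"
  then obtain c where M: "M = (\<Sum>i\<le>D. mat_scale (c i) (adj (Q i)))" by (auto simp: bose_mesner_def)
  show "M \<in> mv.span ((\<lambda>i. adj (Q i)) ` {..D})"
    unfolding M by (intro mv.span_sum mv.span_scale mv.span_base) auto
qed

lemma scheme_parts:
  assumes "assoc_scheme R D"
  shows "\<forall>i\<le>D. R i \<noteq> {}" "\<forall>i\<le>D. \<forall>j\<le>D. i \<noteq> j \<longrightarrow> R i \<inter> R j = {}"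
    "(\<Union>i\<in>{..D}. R i) = UNIV" "R 0 = Id"
    "\<forall>i\<le>D. \<forall>j\<le>D. \<forall>l\<le>D. \<exists>p::nat. \<forall>x y. (x, y) \<in> R l \<longrightarrow>
         card {z. (x, z) \<in> R i \<and> (z, y) \<in> R j} = p"
proof -
  note a = assms[unfolded assoc_scheme_def]
  show "\<forall>i\<le>D. R i \<noteq> {}" by (rule conjunct1[OF a])
  show "\<forall>i\<le>D. \<forall>j\<le>D. i \<noteq> j \<longrightarrow> R i \<inter> R j = {}" by (rule conjunct1[OF conjunct2[OF a]])
  show "(\<Union>i\<in>{..D}. R i) = UNIV" by (rule conjunct1[OF conjunct2[OF conjunct2[OF a]]])
  show "R 0 = Id" by (rule conjunct1[OF conjunct2[OF conjunct2[OF conjunct2[OF a]]]])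
  show "\<forall>i\<le>D. \<forall>j\<le>D. \<forall>l\<le>D. \<exists>p::nat. \<forall>x y. (x, y) \<in> R l \<longrightarrow>
         card {z. (x, z) \<in> R i \<and> (z, y) \<in> R j} = p"
    by (rule conjunct2[OF conjunct2[OF conjunct2[OF conjunct2[OF conjunct2[OF a]]]]])
qed

lemma scheme_disj: "assoc_scheme R D \<Longrightarrow> \<forall>i\<le>D. \<forall>j\<le>D. i \<noteq> j \<longrightarrow> R i \<inter> R j = {}"
  by (rule scheme_parts(2))

lemma scheme_cover: assumes "assoc_scheme R D" shows "\<exists>l\<le>D. (x,y) \<in> R l"
proof -
  have "(x,y) \<in> (\<Union>i\<in>{..D}. R i)" using scheme_parts(3)[OF assms] by simp
  thus ?thesis by auto
qed

lemma bm_const: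
  assumes S: "assoc_scheme R D" and Z: "Z \<in> bose_mesner R D" and l: "l \<le> D" "(x,y) \<in> R l" "(x',y') \<in> R l"
  shows "Z $ x $ y = Z $ x' $ y'"
proof -
  obtain c where M: "Z = (\<Sum>i\<le>D. mat_scale (c i) (adj (R i)))" using Z by (auto simp: bose_mesner_def)
  show ?thesis using bm_entry[OF scheme_disj[OF S] l(1,2)] bm_entry[OF scheme_disj[OF S] l(1,3)] M by simp
qed

lemma bm_of_const:
  assumes S: "assoc_scheme R D"
    and c: "\<forall>l\<le>D. \<forall>x y x' y'. (x,y) \<in> R l \<longrightarrow> (x',y') \<in> R l \<longrightarrow> Z$x$y = Z$x'$y'"
  shows "Z \<in> bose_mesner R D"
proof -
  define c where "c l = (let p = (SOME p. p \<in> R l) in Z $ fst p $ snd p)" for l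
  have "Z = (\<Sum>i\<le>D. mat_scale (c i) (adj (R i)))"
  proof (subst vec_eq_iff, intro allI, subst vec_eq_iff, intro allI)
    fix x y
    obtain l where l: "l \<le> D" "(x,y) \<in> R l" using scheme_cover[OF S] by blast
    have "(SOME p. p \<in> R l) \<in> R l" using l(2) by (rule someI)
    hence "c l = Z $ x $ y" using c l unfolding c_def Let_def
      by (metis prod.collapse)
    thus "Z $ x $ y = (\<Sum>i\<le>D. mat_scale (c i) (adj (R i))) $ x $ y"
      using bm_entry[OF scheme_disj[OF S] l] by simp
  qed
  thus ?thesis by (auto simp: bose_mesner_def)
qed

lemma adj_mult_entry:
  "(adj S ** adj T) $ x $ y = of_nat (card {z. (x,z) \<in> S \<and> (z,y) \<in> T})"
proof -
  have "(adj S ** adj T) $ x $ y = (\<Sum>z\<in>UNIV. if (x,z) \<in> S \<and> (z,y) \<in> T then 1 else (0::complex))"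
    unfolding matrix_matrix_mult_def by (simp only: vec_lambda_beta adj_entry) (intro sum.cong refl, simp)
  also have "\<dots> = (\<Sum>z\<in>{z\<in>UNIV. (x,z) \<in> S \<and> (z,y) \<in> T}. 1)"
    by (rule sum.inter_filter[symmetric]) simp
  also have "\<dots> = of_nat (card {z. (x,z) \<in> S \<and> (z,y) \<in> T})"
    by simp
  finally show ?thesis .
qed

lemma bm_mult:
  assumes S: "assoc_scheme R D" and Z: "Z \<in> bose_mesner R D" and W: "W \<in> bose_mesner R D"
  shows "Z ** W \<in> bose_mesner R D"
proof -
  obtain a where a: "Z = (\<Sum>i\<le>D. mat_scale (a i) (adj (R i)))" using Z by (auto simp: bose_mesner_def)
  obtain b where b: "W = (\<Sum>j\<le>D. mat_scale (b j) (adj (R j)))" using W by (auto simp: bose_mesner_def)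
  have ZW: "Z ** W = (\<Sum>i\<le>D. \<Sum>j\<le>D. mat_scale (a i * b j) (adj (R i) ** adj (R j)))"
  proof -
    have "Z ** W = (\<Sum>i\<le>D. mat_scale (a i) (adj (R i) ** W))"
      unfolding a mat_mul_sum_left mat_mul_scale_left ..
    also have "\<dots> = (\<Sum>i\<le>D. mat_scale (a i) (\<Sum>j\<le>D. mat_scale (b j) (adj (R i) ** adj (R j))))"
      unfolding b mat_mul_sum_right mat_mul_scale_right ..
    also have "\<dots> = (\<Sum>i\<le>D. \<Sum>j\<le>D. mat_scale (a i * b j) (adj (R i) ** adj (R j)))"
      by (simp only: mv.scale_sum_right mv.scale_scale)
    finally show ?thesis .
  qed
  show ?thesis
  proof (rule bm_of_const[OF S], intro allI impI)
    fix l x y x' y' assume l: "l \<le> D" "(x,y) \<in> R l" "(x',y') \<in> R l"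
    have pc: "card {z. (x,z) \<in> R i \<and> (z,y) \<in> R j} = card {z. (x',z) \<in> R i \<and> (z,y') \<in> R j}"
      if ij: "i \<le> D" "j \<le> D" for i j
    proof -
      obtain p where p: "\<forall>x y. (x, y) \<in> R l \<longrightarrow> card {z. (x, z) \<in> R i \<and> (z, y) \<in> R j} = p"
        using scheme_parts(5)[OF S, rule_format, OF ij l(1)] by (elim exE)
      show ?thesis using p[rule_format, OF l(2)] p[rule_format, OF l(3)] by (rule trans[OF _ sym])
    qed
    have ent: "(Z ** W) $ u $ v = (\<Sum>i\<le>D. \<Sum>j\<le>D. a i * b j * of_nat (card {z. (u,z) \<in> R i \<and> (z,v) \<in> R j}))" for u v
      unfolding ZW by (simp only: sum_component mat_scale_entry adj_mult_entry)
    show "(Z ** W) $ x $ y = (Z ** W) $ x' $ y'"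
      unfolding ent by (intro sum.cong refl) (simp only: pc atMost_iff)
  qed
qed

lemma bm_add:
  assumes "Z \<in> bose_mesner R D" "W \<in> bose_mesner R D"
  shows "Z + W \<in> bose_mesner R D" "Z - W \<in> bose_mesner R D"
proof -
  obtain a where a: "Z = (\<Sum>i\<le>D. mat_scale (a i) (adj (R i)))" using assms by (auto simp: bose_mesner_def)
  obtain b where b: "W = (\<Sum>j\<le>D. mat_scale (b j) (adj (R j)))" using assms by (auto simp: bose_mesner_def)
  have "Z + W = (\<Sum>i\<le>D. mat_scale (a i + b i) (adj (R i)))"
    by (simp add: a b sum.distrib[symmetric] mv.scale_left_distrib)
  thus "Z + W \<in> bose_mesner R D" by (auto simp: bose_mesner_def)
  have "Z - W = (\<Sum>i\<le>D. mat_scale (a i - b i) (adj (R i)))"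
    by (simp add: a b sum_subtractf[symmetric] mv.scale_left_diff_distrib)
  thus "Z - W \<in> bose_mesner R D" by (auto simp: bose_mesner_def)
qed

lemma bm_adj: "l \<le> D \<Longrightarrow> adj (Q l) \<in> bose_mesner Q D"
proof -
  assume l: "l \<le> D"
  have "adj (Q l) = (\<Sum>i\<le>D. mat_scale (if i = l then 1 else 0) (adj (Q i)))"
    using l by (simp add: if_distrib[of "\<lambda>c. mat_scale c _"] sum.delta cong: if_cong)
  thus ?thesis by (auto simp: bose_mesner_def)
qed

lemma bm_pow:
  assumes S: "assoc_scheme R D" and Z: "Z \<in> bose_mesner R D"
  shows "mat_pow Z k \<in> bose_mesner R D"
proof (induction k)
  case 0
  have "R 0 = Id" using scheme_parts(4)[OF S] .
  hence "mat 1 = adj (R 0)" by (simp add: vec_eq_iff mat_def adj_def)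
  then show ?case using bm_adj[of 0 D R] by simp
next
  case (Suc k)
  then show ?case by (simp add: mat_pow_Suc bm_mult[OF S Z])
qed

lemma adj_commute:
  assumes C: "commutative_scheme R D" and ij: "i \<le> D" "j \<le> D"
  shows "adj (R i) ** adj (R j) = adj (R j) ** adj (R i)"
proof (subst vec_eq_iff, intro allI, subst vec_eq_iff, intro allI)
  fix x y
  have S: "assoc_scheme R D" using C[unfolded commutative_scheme_def] by (rule conjunct1)
  obtain l where l: "l \<le> D" "(x,y) \<in> R l" using scheme_cover[OF S] by blast
  have "card {z. (x, z) \<in> R i \<and> (z, y) \<in> R j} = card {z. (x, z) \<in> R j \<and> (z, y) \<in> R i}"
    using conjunct2[OF C[unfolded commutative_scheme_def]] l ij by blast
  thus "(adj (R i) ** adj (R j)) $ x $ y = (adj (R j) ** adj (R i)) $ x $ y"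
    by (simp add: adj_mult_entry)
qed




definition vcnj :: "complex^'n \<Rightarrow> complex^'n" where "vcnj w = (\<chi> i. cnj (w$i))"

lemma real_mat_vcnj:
  assumes "\<forall>i j. cnj (Z$i$j) = Z$i$j"
  shows "Z *v vcnj w = vcnj (Z *v w)"
  using assms by (simp add: vec_eq_iff vcnj_def matrix_vector_mult_def)

lemma vcnj_scale: "vcnj (l *s w) = cnj l *s vcnj w"
  by (simp add: vec_eq_iff vcnj_def)

lemma vcnj_nz: "w \<noteq> 0 \<Longrightarrow> vcnj w \<noteq> 0"
  by (auto simp: vec_eq_iff vcnj_def)

lemma ct_adj: "ct (adj S) = adj (converse S)"
  by (simp add: vec_eq_iff ct_def)

lemma ct_add: "ct (X + Y) = ct X + ct Y"
  by (simp add: vec_eq_iff ct_def)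

lemma ct_diff: "ct (X - Y) = ct X - ct Y"
  by (simp add: vec_eq_iff ct_def)

lemma mat_mul_neg: "X ** (- Y) = - (X ** (Y::complex^'n^'n))" "(- X) ** Y = - (X ** (Y::complex^'n^'n))"
  by (simp_all add: vec_eq_iff matrix_matrix_mult_def sum_negf)

lemma normal_eig_ct:
  assumes "normalm Z" "Z *v w = l *s w"
  shows "ct Z *v w = cnj l *s w"
proof -
  have "(Z - mat l) *v w = 0" using assms(2) by (simp add: matrix_vector_mult_diff_rdistrib mat_vec_const)
  hence "ct (Z - mat l) *v w = 0" by (rule normal_kernel[OF normal_shift[OF assms(1)]])
  thus ?thesis by (simp add: ct_diff_mat matrix_vector_mult_diff_rdistrib mat_vec_const)
qed

lemma poly_mat_span_lt:
  assumes "p = 0 \<or> degree p < m"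
  shows "poly_mat p A \<in> mv.span (mat_pow A ` {..<m})"
proof (cases "p = 0")
  case True thus ?thesis by (simp add: mv.span_zero)
next
  case False
  hence "degree p < m" using assms by simp
  hence "poly_mat p A = (\<Sum>k<m. mat_scale (coeff p k) (mat_pow A k))" by (rule poly_mat_lt)
  also have "\<dots> \<in> mv.span (mat_pow A ` {..<m})"
    by (intro mv.span_sum mv.span_scale mv.span_base) auto
  finally show ?thesis .
qed

lemma span_powers_poly:
  assumes inj: "inj_on (mat_pow Z) {..<m}" and X: "X \<in> mv.span (mat_pow Z ` {..<m})"
  shows "\<exists>p. X = poly_mat p Z"
proof -
  obtain u where u: "X = (\<Sum>v\<in>mat_pow Z ` {..<m}. mat_scale (u v) v)"
    using X mv.span_finite[of "mat_pow Z ` {..<m}"] by auto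
  also have "\<dots> = (\<Sum>k<m. mat_scale (u (mat_pow Z k)) (mat_pow Z k))"
    using sum.reindex[OF inj, of "\<lambda>v. mat_scale (u v) v"] by simp
  also have "\<dots> = poly_mat (\<Sum>k<m. monom (u (mat_pow Z k)) k) Z"
    by (simp only: poly_mat_monoms)
  finally show ?thesis by blast
qed

theorem theorem1p2:
  fixes R :: "nat \<Rightarrow> ('a::finite \<times> 'a) set" and d :: nat
  assumes "commutative_scheme R (d + 1)"
    and "converse (R d) = R (d + 1)"
    and "\<forall>i<d. converse (R i) = R i"
    and "generates (adj (R d \<union> R (d + 1))) (bose_mesner (symmetrization R d) d)"
  shows "card (eigenvalues (adj (R d))) = d + 2
         \<and> generates (adj (R d)) (bose_mesner R (d + 1))"
proof -
  note C = assms(1) and Tr = assms(2) and G = assms(4)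
  have S: "assoc_scheme R (d+1)" using C[unfolded commutative_scheme_def] by (rule conjunct1)
  note ne = scheme_parts(1)[OF S] and disj = scheme_parts(2)[OF S]
  define B where "B = adj (R d)"
  define Bt where "Bt = adj (R (d+1))"
  define A where "A = adj (R d \<union> R (d + 1))"
  define N where "N = B - Bt"
  define M where "M = bose_mesner R (d+1)"
  define SS where "SS = (\<lambda>i. adj (R i)) ` {..d+1}"
  have dj: "R d \<inter> R (d+1) = {}" using disj by auto
  have finSS: "finite SS" unfolding SS_def by simp
  have cardSS: "card SS = d + 2"
    unfolding SS_def using card_image[OF family_indep(1)[OF ne disj]] by simp
  have AB: "A = B + Bt" unfolding A_def B_def Bt_def using dj by (auto simp: vec_eq_iff)
  have ctB: "ct B = Bt" unfolding B_def Bt_def by (simp add: ct_adj Tr)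
  have ctBt: "ct Bt = B" using ctB ct_ct by metis
  have BBt: "B ** Bt = Bt ** B" unfolding B_def Bt_def by (rule adj_commute[OF C]) auto
  have nB: "normalm B" unfolding normalm_def ctB by (rule BBt)
  have nA: "normalm A" unfolding normalm_def AB ct_add ctB ctBt by (simp add: add.commute)
  have ctN: "ct N = - N" unfolding N_def ct_diff ctB ctBt by simp
  have nN: "normalm N" unfolding normalm_def ctN by (simp add: mat_mul_neg)
  have AcB: "A ** B = B ** A" unfolding AB by (simp add: matrix_add_rdistrib' matrix_add_ldistrib BBt)
  have NcB: "N ** B = B ** N" unfolding N_def by (simp add: matrix_diff_rdistrib' matrix_diff_ldistrib' BBt)
  have BM: "B \<in> M" "Bt \<in> M" unfolding M_def B_def Bt_def by (auto intro: bm_adj)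
  have AM: "A \<in> M" "N \<in> M" unfolding AB N_def using BM bm_add by (auto simp: M_def)
  have MSS: "M \<subseteq> mv.span SS" unfolding M_def SS_def by (rule bm_span)
  have powspan: "mat_pow Z k \<in> mv.span SS" if "Z \<in> M" for Z k
    using bm_pow[OF S, of Z k] that MSS by (auto simp: M_def)
  obtain qB where qB: "qB \<noteq> 0" "poly_mat qB B = 0"
    using annihilator_exists[OF finSS powspan[OF BM(1)]] by blast
  obtain qA where qA: "qA \<noteq> 0" "poly_mat qA A = 0"
    using annihilator_exists[OF finSS powspan[OF AM(1)]] by blast
  obtain qN where qN: "qN \<noteq> 0" "poly_mat qN N = 0"
    using annihilator_exists[OF finSS powspan[OF AM(2)]] by blast
  have finB: "finite (eigenvalues B)" by (rule eig_finite[OF qB])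
  have finA: "finite (eigenvalues A)" by (rule eig_finite[OF qA])
  have finN: "finite (eigenvalues N)" by (rule eig_finite[OF qN])

  have le: "card (eigenvalues B) \<le> d + 2"
  proof (rule ccontr)
    assume "\<not> card (eigenvalues B) \<le> d + 2"
    then obtain L where L: "L \<subseteq> eigenvalues B" "card L = d + 3" "finite L"
      using obtain_subset_with_card_n[of "d+3" "eigenvalues B"] by auto
    note pi = powers_indep[OF L(1) L(3) L(2)]
    have "mat_pow B ` {..<d+3} \<subseteq> mv.span SS" using powspan[OF BM(1)] by auto
    from mv.independent_span_bound[OF finSS pi(2) this]
    have "card (mat_pow B ` {..<d+3}) \<le> card SS" by simp
    moreover have "card (mat_pow B ` {..<d+3}) = d + 3" using card_image[OF pi(1)] by simp
    ultimately show False using cardSS by simp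
  qed

  define Q where "Q = symmetrization R d"
  have Qd: "Q d = R d \<union> R (d+1)" by (simp add: Q_def symmetrization_def)
  have Qlt: "i < d \<Longrightarrow> Q i = R i" for i by (simp add: Q_def symmetrization_def)
  have neQ: "\<forall>i\<le>d. Q i \<noteq> {}"
  proof (intro allI impI)
    fix i assume "i \<le> d"
    show "Q i \<noteq> {}"
    proof (cases "i < d")
      case True thus ?thesis using ne Qlt by auto
    next
      case False thus ?thesis using ne Qd \<open>i \<le> d\<close> by auto
    qed
  qed
  have disjQ: "\<forall>i\<le>d. \<forall>j\<le>d. i \<noteq> j \<longrightarrow> Q i \<inter> Q j = {}"
  proof (intro allI impI)
    fix i j assume ij: "i \<le> d" "j \<le> d" "i \<noteq> j"
    show "Q i \<inter> Q j = {}"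
    proof (cases "i < d \<and> j < d")
      case True thus ?thesis using disj ij Qlt by auto
    next
      case False
      hence "i = d \<and> j < d \<or> j = d \<and> i < d" using ij by auto
      thus ?thesis
      proof
        assume h: "i = d \<and> j < d"
        have "R d \<inter> R j = {}" "R (d+1) \<inter> R j = {}" using disj h by auto
        thus ?thesis using h Qd Qlt by auto
      next
        assume h: "j = d \<and> i < d"
        have "R d \<inter> R i = {}" "R (d+1) \<inter> R i = {}" using disj h by auto
        thus ?thesis using h Qd Qlt by auto
      qed
    qed
  qed
  define SQ where "SQ = (\<lambda>i. adj (Q i)) ` {..d}"
  have cardSQ: "card SQ = d + 1"
    unfolding SQ_def using card_image[OF family_indep(1)[OF neQ disjQ]] by simp
  define P where "P = (\<Prod>l\<in>eigenvalues A. [:-l,1:])"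
  define m where "m = card (eigenvalues A)"
  have PA: "poly_mat P A = 0" unfolding P_def by (rule ss_matrix[OF nA qA])
  have Pnz: "P \<noteq> 0" unfolding P_def using finA by (simp add: prod_zero_iff)
  have degP: "degree P = m" unfolding P_def m_def
    by (subst degree_prod_eq_sum_degree) auto
  have ge: "d + 1 \<le> m"
  proof -
    have "SQ \<subseteq> mv.span (mat_pow A ` {..<m})"
    proof
      fix X assume "X \<in> SQ"
      then obtain i where i: "i \<le> d" "X = adj (Q i)" unfolding SQ_def by auto
      have "X \<in> bose_mesner Q d" using i bm_adj by simp
      then obtain p where p: "X = poly_mat p A"
        using G unfolding generates_def Q_def A_def by blast
      have "poly_mat p A = poly_mat (p div P * P + p mod P) A" by simp
      also have "\<dots> = poly_mat (p mod P) A"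
        by (simp only: poly_mat_add poly_mat_mult PA times0_right add_0_left)
      finally have "X = poly_mat (p mod P) A" using p by simp
      moreover have "p mod P = 0 \<or> degree (p mod P) < m"
        using degree_mod_less[OF Pnz, of p] degP by simp
      ultimately show "X \<in> mv.span (mat_pow A ` {..<m})" using poly_mat_span_lt by simp
    qed
    from mv.independent_span_bound[OF _ family_indep(2)[OF neQ disjQ] this[unfolded SQ_def]]
    have "card SQ \<le> card (mat_pow A ` {..<m})" unfolding SQ_def by simp
    also have "\<dots> \<le> m" using card_image_le[of "{..<m}" "mat_pow A"] by simp
    finally show ?thesis using cardSQ by simp
  qed

  have BtB: "Bt *v w = cnj l *s w" if "B *v w = l *s w" for w l
    using normal_eig_ct[OF nB that] ctB by simp
  have into: "A *v w = (l + cnj l) *s w" if "B *v w = l *s w" for w l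
    unfolding AB using that BtB[OF that] by (simp add: matrix_vector_mult_add_rdistrib vector_sadd_rdistrib)
  have onto: "\<exists>l\<in>eigenvalues B. mu = l + cnj l" if mu: "mu \<in> eigenvalues A" for mu
  proof -
    obtain v where v: "v \<noteq> 0" "A *v v = mu *s v" using mu by (auto simp: eigenvalues_def)
    have "poly_mat qB B *v v = 0" using qB by simp
    from eigvec_from_annih[OF qB(1) this v(1)] obtain g l where
      gl: "poly_mat g B *v v \<noteq> 0" "B *v (poly_mat g B *v v) = l *s (poly_mat g B *v v)" by blast
    let ?w = "poly_mat g B *v v"
    have "A *v ?w = mu *s ?w"
      using poly_mat_commute[OF AcB, of g] v(2)
      by (simp add: matrix_vector_mul_assoc mat_vec_scale) (metis matrix_vector_mul_assoc mat_vec_scale)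
    moreover have "A *v ?w = (l + cnj l) *s ?w" by (rule into[OF gl(2)])
    ultimately have "mu = l + cnj l" using eig_unique gl(1) by blast
    moreover have "l \<in> eigenvalues B" using gl unfolding eigenvalues_def by blast
    ultimately show ?thesis by blast
  qed

  have Nnz: "N \<noteq> 0"
  proof
    assume "N = 0"
    have "R d \<noteq> {}" using ne by simp
    then obtain x y where xy: "(x,y) \<in> R d" by fastforce
    have "(x,y) \<notin> R (d+1)" using xy dj by auto
    hence "N $ x $ y = 1" using xy by (simp add: N_def B_def Bt_def)
    with \<open>N = 0\<close> show False by simp
  qed
  obtain sg where sg: "sg \<in> eigenvalues N" "sg \<noteq> 0"
  proof (rule ccontr)
    assume "\<not> thesis"
    hence sub: "eigenvalues N \<subseteq> {0}" using that by blast
    have PN: "poly_mat (\<Prod>l\<in>eigenvalues N. [:-l,1:]) N = 0" by (rule ss_matrix[OF nN qN])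
    show False
    proof (cases "eigenvalues N = {}")
      case True
      hence "mat 1 = (0::complex^'a^'a)" using PN by (simp add: one_pCons)
      hence "(mat 1 :: complex^'a^'a) $ undefined $ undefined = 0" by simp
      thus False by (simp add: mat_def)
    next
      case False
      hence "eigenvalues N = {0}" using sub by blast
      hence "N - mat 0 = 0" using PN by (simp add: poly_mat_linear[of 0, simplified])
      thus False using Nnz by simp
    qed
  qed
  obtain l0 where l0: "l0 \<in> eigenvalues B" "cnj l0 \<in> eigenvalues B" "cnj l0 \<noteq> l0"
  proof -
    obtain v where v: "v \<noteq> 0" "N *v v = sg *s v" using sg(1) by (auto simp: eigenvalues_def)
    have "poly_mat qB B *v v = 0" using qB by simp
    from eigvec_from_annih[OF qB(1) this v(1)] obtain g l where
      gl: "poly_mat g B *v v \<noteq> 0" "B *v (poly_mat g B *v v) = l *s (poly_mat g B *v v)" by blast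
    let ?w = "poly_mat g B *v v"
    have "N *v ?w = sg *s ?w"
      using poly_mat_commute[OF NcB, of g] v(2)
      by (metis matrix_vector_mul_assoc mat_vec_scale)
    moreover have "N *v ?w = (l - cnj l) *s ?w"
      unfolding N_def using gl(2) BtB[OF gl(2)] by (simp add: matrix_vector_mult_diff_rdistrib vec_eq_iff algebra_simps)
    ultimately have "sg = l - cnj l" using eig_unique gl(1) by blast
    hence ne1: "cnj l \<noteq> l" using sg(2) by auto
    have l1: "l \<in> eigenvalues B" using gl unfolding eigenvalues_def by blast
    have realB: "\<forall>i j. cnj (B$i$j) = B$i$j" by (simp add: B_def)
    have "B *v vcnj ?w = cnj l *s vcnj ?w"
      using real_mat_vcnj[OF realB, of ?w] gl(2) by (simp add: vcnj_scale)
    hence l2: "cnj l \<in> eigenvalues B" using vcnj_nz[OF gl(1)] unfolding eigenvalues_def by blast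
    show ?thesis using that[OF l1 l2 ne1] .
  qed

  have "eigenvalues A \<subseteq> (\<lambda>l. l + cnj l) ` (eigenvalues B - {l0})"
  proof
    fix mu assume "mu \<in> eigenvalues A"
    then obtain l where l: "l \<in> eigenvalues B" "mu = l + cnj l" using onto by blast
    show "mu \<in> (\<lambda>l. l + cnj l) ` (eigenvalues B - {l0})"
    proof (cases "l = l0")
      case False thus ?thesis using l by blast
    next
      case True
      have "mu = cnj l0 + cnj (cnj l0)" using l True by simp
      thus ?thesis using l0 by blast
    qed
  qed
  hence "m \<le> card ((\<lambda>l. l + cnj l) ` (eigenvalues B - {l0}))"
    unfolding m_def using finB by (intro card_mono) auto
  also have "\<dots> \<le> card (eigenvalues B - {l0})" by (rule card_image_le) (use finB in simp)
  also have "\<dots> = card (eigenvalues B) - 1" using l0(1) finB by simp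
  finally have cardB: "card (eigenvalues B) = d + 2" using ge le by linarith

  define T where "T = mat_pow B ` {..<d+2}"
  note pi = powers_indep[OF order_refl finB cardB]
  have cardT: "card T = d + 2" unfolding T_def using card_image[OF pi(1)] by simp
  have TSS: "T \<subseteq> mv.span SS" unfolding T_def using powspan[OF BM(1)] by auto
  have SST: "SS \<subseteq> mv.span T"
  proof
    fix X assume X: "X \<in> SS"
    show "X \<in> mv.span T"
    proof (rule ccontr)
      assume nX: "X \<notin> mv.span T"
      have ind: "mv.independent (insert X T)"
        using mv.independent_insertI[OF nX pi(2)[folded T_def]] .
      have "insert X T \<subseteq> mv.span SS" using TSS X mv.span_base by auto
      from mv.independent_span_bound[OF finSS ind this] have "card (insert X T) \<le> card SS" by simp
      moreover have "X \<notin> T" using nX mv.span_base by blast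
      hence "card (insert X T) = d + 3" using cardT by (simp add: T_def)
      ultimately show False using cardSS by simp
    qed
  qed
  have "M \<subseteq> mv.span T"
    using MSS mv.span_minimal[OF SST mv.subspace_span] by blast
  hence gen: "generates B M"
    unfolding generates_def using span_powers_poly[OF pi(1)] T_def by blast
  show ?thesis using cardB gen unfolding B_def M_def by simp
qed


end
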